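(* Let $((A_i,B_i))_{i\in\mathbb N}$ be a strictly increasing sequence of oriented separations of a connected locally finite graph $G$ whose underlying separations are tight, let $(A,B)=(\bigcup_iA_i,\bigcap_iB_i)$ be its limit, and let $(C,D)$ be an oriented separation of $G$ of finite order. If the sequence is non-exhaustive (i.e. $B\neq\emptyset$) and $(C,D)\le(A,B)$, then there is $I\in\mathbb N$ with $(C,D)\le(A_i,B_i)$ for all $i\ge I$.
   Context: A separation of $G$ is an unordered pair $\{A,B\}$ of subsets of $V(G)$ with $A\cup B=V(G)$ and no edge between $A\setminus B$ and $B\setminus A$; its order is $|A\cap B|$. Oriented separations are ordered by $(A,B)\le(C,D)$ iff $A\subseteq C$ and $B\supseteq D$. For $X\subseteq V(G)$, a component $K$ of $G-X$ is tight if $N_G(K)=X$; a separation $\{A,B\}$ is tight if both $A\setminus B$ and $B\setminus A$ contain the vertex set of a tight component of $G-(A\cap B)$. *)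

theory Defs
  imports Main
begin

definition graph :: "'a set \<Rightarrow> ('a \<Rightarrow> 'a \<Rightarrow> bool) \<Rightarrow> bool" where
  "graph V E \<longleftrightarrow> (\<forall>x y. E x y \<longrightarrow> x \<in> V \<and> y \<in> V \<and> E y x \<and> x \<noteq> y)"

definition locally_finite :: "'a set \<Rightarrow> ('a \<Rightarrow> 'a \<Rightarrow> bool) \<Rightarrow> bool" where
  "locally_finite V E \<longleftrightarrow> (\<forall>v\<in>V. finite {w. E v w})"

definition reach_in :: "('a \<Rightarrow> 'a \<Rightarrow> bool) \<Rightarrow> 'a set \<Rightarrow> 'a \<Rightarrow> 'a \<Rightarrow> bool" where
  "reach_in E S = (\<lambda>u v. E u v \<and> u \<in> S \<and> v \<in> S)\<^sup>*\<^sup>*"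

definition connected_graph :: "'a set \<Rightarrow> ('a \<Rightarrow> 'a \<Rightarrow> bool) \<Rightarrow> bool" where
  "connected_graph V E \<longleftrightarrow> V \<noteq> {} \<and> (\<forall>x\<in>V. \<forall>y\<in>V. reach_in E V x y)"

definition component_of :: "'a set \<Rightarrow> ('a \<Rightarrow> 'a \<Rightarrow> bool) \<Rightarrow> 'a set \<Rightarrow> 'a set \<Rightarrow> bool" where
  "component_of V E X K \<longleftrightarrow>
     (\<exists>x \<in> V - X. K = {y \<in> V - X. reach_in E (V - X) x y})"

definition nbh :: "('a \<Rightarrow> 'a \<Rightarrow> bool) \<Rightarrow> 'a set \<Rightarrow> 'a set" where
  "nbh E K = {v. v \<notin> K \<and> (\<exists>u\<in>K. E u v)}"

definition tight_component :: "'a set \<Rightarrow> ('a \<Rightarrow> 'a \<Rightarrow> bool) \<Rightarrow> 'a set \<Rightarrow> 'a set \<Rightarrow> bool" where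
  "tight_component V E X K \<longleftrightarrow> component_of V E X K \<and> nbh E K = X"

definition separation :: "'a set \<Rightarrow> ('a \<Rightarrow> 'a \<Rightarrow> bool) \<Rightarrow> 'a set \<Rightarrow> 'a set \<Rightarrow> bool" where
  "separation V E A B \<longleftrightarrow> A \<union> B = V \<and>
     (\<forall>x y. x \<in> A - B \<longrightarrow> y \<in> B - A \<longrightarrow> \<not> E x y)"

definition finite_order :: "'a set \<Rightarrow> 'a set \<Rightarrow> bool" where
  "finite_order A B \<longleftrightarrow> finite (A \<inter> B)"

definition tight_separation :: "'a set \<Rightarrow> ('a \<Rightarrow> 'a \<Rightarrow> bool) \<Rightarrow> 'a set \<Rightarrow> 'a set \<Rightarrow> bool" where
  "tight_separation V E A B \<longleftrightarrow> separation V E A B \<and>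
     (\<exists>K. tight_component V E (A \<inter> B) K \<and> K \<subseteq> A - B) \<and>
     (\<exists>K. tight_component V E (A \<inter> B) K \<and> K \<subseteq> B - A)"

definition sep_le :: "'a set \<times> 'a set \<Rightarrow> 'a set \<times> 'a set \<Rightarrow> bool" where
  "sep_le P Q \<longleftrightarrow> fst P \<subseteq> fst Q \<and> snd Q \<subseteq> snd P"

definition sep_less :: "'a set \<times> 'a set \<Rightarrow> 'a set \<times> 'a set \<Rightarrow> bool" where
  "sep_less P Q \<longleftrightarrow> sep_le P Q \<and> P \<noteq> Q"

end

theory Submission
  imports Defs
begin

lemma cross_edge:
  assumes "reach_in E V a b" "P a" "\<not> P b"
  shows "\<exists>v w. E v w \<and> v \<in> V \<and> w \<in> V \<and> P v \<and> \<not> P w"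
  using assms unfolding reach_in_def
  by (induction rule: rtranclp_induct) blast+

lemma chain_finite:
  fixes A :: "nat \<Rightarrow> 'a set"
  assumes "finite F" "F \<subseteq> (\<Union>i. A i)" "\<And>i j. i \<le> j \<Longrightarrow> A i \<subseteq> A j"
  shows "\<exists>I. F \<subseteq> A I"
  using assms(1,2)
proof (induction rule: finite_induct)
  case empty then show ?case by blast
next
  case (insert x F)
  then obtain I where I: "F \<subseteq> A I" by blast
  from insert obtain j where j: "x \<in> A j" by blast
  have "F \<subseteq> A (max I j)" using I assms(3)[of I "max I j", OF max.cobounded1] by blast
  moreover have "x \<in> A (max I j)" using j assms(3)[of j "max I j", OF max.cobounded2] by blast
  ultimately show ?case by blast
qed

theorem mainTheorem10:
  fixes V :: "'a set" and E :: "'a \<Rightarrow> 'a \<Rightarrow> bool"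
    and As Bs :: "nat \<Rightarrow> 'a set" and C D :: "'a set"
  assumes "graph V E" and "connected_graph V E" and "locally_finite V E"
    and "\<And>i. tight_separation V E (As i) (Bs i)"
    and "\<And>i. sep_less (As i, Bs i) (As (Suc i), Bs (Suc i))"
    and "separation V E C D" and "finite_order C D"
    and "(\<Inter>i. Bs i) \<noteq> {}"
    and "sep_le (C, D) ((\<Union>i. As i), (\<Inter>i. Bs i))"
  shows "\<exists>I. \<forall>i\<ge>I. sep_le (C, D) (As i, Bs i)"
proof -
  have G: "\<And>x y. E x y \<Longrightarrow> x \<in> V \<and> y \<in> V \<and> E y x" using assms(1) unfolding graph_def by blast
  have monoA: "\<And>i j. i \<le> j \<Longrightarrow> As i \<subseteq> As j"
  proof -
    fix i j :: nat assume "i \<le> j"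
    have "\<And>n. As n \<le> As (Suc n)" using assms(5) unfolding sep_less_def sep_le_def by auto
    then show "As i \<subseteq> As j" using lift_Suc_mono_le[of As] \<open>i \<le> j\<close> by blast
  qed
  have sepU: "\<And>i. As i \<union> Bs i = V" and sepE: "\<And>i x y. x \<in> As i - Bs i \<Longrightarrow> y \<in> Bs i - As i \<Longrightarrow> \<not> E x y"
    using assms(4) unfolding tight_separation_def separation_def by blast+
  have tightB: "\<And>i. \<exists>K. tight_component V E (As i \<inter> Bs i) K \<and> K \<subseteq> Bs i - As i"
    using assms(4) unfolding tight_separation_def by blast
  have CDU: "C \<union> D = V" and CDE: "\<And>x y. x \<in> C - D \<Longrightarrow> y \<in> D - C \<Longrightarrow> \<not> E x y"
    using assms(6) unfolding separation_def by blast+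
  have CA: "C \<subseteq> (\<Union>i. As i)" and BD: "(\<Inter>i. Bs i) \<subseteq> D" using assms(9) unfolding sep_le_def by auto
  have finX: "finite (C \<inter> D)" using assms(7) unfolding finite_order_def .
  have conn: "\<And>x y. x \<in> V \<Longrightarrow> y \<in> V \<Longrightarrow> reach_in E V x y" using assms(2) unfolding connected_graph_def by blast
  have lf: "\<And>v. v \<in> V \<Longrightarrow> finite {w. E v w}" using assms(3) unfolding locally_finite_def by blast
  obtain r where r: "r \<in> V" "\<And>i. r \<notin> As i"
  proof -
    obtain b where b: "b \<in> (\<Inter>i. Bs i)" using assms(8) by blast
    have bV: "b \<in> V" using b sepU[of 0] by blast
    show ?thesis
    proof (cases "b \<in> (\<Union>i. As i)")
      case False then show ?thesis using that bV by blast
    next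
      case True
      then obtain j where j: "b \<in> As j" by blast
      show ?thesis
      proof (rule ccontr)
        assume nr: "\<not> ?thesis"
        have sub: "{w. E b w} \<subseteq> (\<Union>i. As i)"
        proof
          fix w assume "w \<in> {w. E b w}"
          then have "w \<in> V" using G by blast
          then show "w \<in> (\<Union>i. As i)" using nr that by blast
        qed
        then obtain I' where I': "{w. E b w} \<subseteq> As I'" using chain_finite[OF lf[OF bV] sub monoA] by blast
        define i where "i = max j I'"
        have bi: "b \<in> As i \<inter> Bs i" using j monoA[of j i] b unfolding i_def by auto
        obtain K where K: "tight_component V E (As i \<inter> Bs i) K" "K \<subseteq> Bs i - As i" using tightB by blast
        have "b \<in> nbh E K" using K(1) bi unfolding tight_component_def by simp
        then obtain u where "u \<in> K" "E u b" unfolding nbh_def by blast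
        then have "u \<in> As I'" using I' G by blast
        then have "u \<in> As i" using monoA[of I' i] unfolding i_def by auto
        then show False using \<open>u \<in> K\<close> K(2) by blast
      qed
    qed
  qed
  have rC: "r \<notin> C" using CA r(2) by blast
  define X where "X = C \<inter> D"
  define N where "N = {y. \<exists>x\<in>X. E x y}"
  have "N = (\<Union>x\<in>X. {y. E x y})" unfolding N_def by blast
  moreover have "X \<subseteq> V" using CDU unfolding X_def by blast
  ultimately have finN: "finite N" using finX lf unfolding X_def by auto
  have XU: "X \<subseteq> (\<Union>i. As i)" using CA unfolding X_def by blast
  have NU: "N \<inter> C \<subseteq> (\<Union>i. As i)" using CA by blast
  have finX': "finite X" using finX unfolding X_def .
  have finNC: "finite (N \<inter> C)" using finN by simp
  obtain I1 where I1: "X \<subseteq> As I1" using chain_finite[OF finX' XU monoA] by blast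
  obtain I2 where I2: "N \<inter> C \<subseteq> As I2" using chain_finite[OF finNC NU monoA] by blast
  have "sep_le (C, D) (As i, Bs i)" if "i \<ge> max I1 I2" for i
  proof -
    have XA: "X \<subseteq> As i" using I1 monoA[of I1 i] that by auto
    have NA: "N \<inter> C \<subseteq> As i" using I2 monoA[of I2 i] that by auto
    have key: "\<not> (x \<in> X \<and> E x y \<and> y \<in> C - D \<and> y \<notin> As i)" for x y
      using NA unfolding N_def by blast
    define S where "S = As i \<inter> Bs i"
    obtain K where K: "tight_component V E S K" "K \<subseteq> Bs i - As i" using tightB unfolding S_def by blast
    then obtain k where k: "k \<in> V - S" "K = {y \<in> V - S. reach_in E (V - S) k y}" "nbh E K = S"
      unfolding tight_component_def component_of_def by blast
    have kK: "k \<in> K" using k unfolding reach_in_def by simp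
    have side0: "(\<lambda>u v. E u v \<and> u \<in> V - S \<and> v \<in> V - S)\<^sup>*\<^sup>* k z \<Longrightarrow> (z \<in> C - D \<longleftrightarrow> k \<in> C - D)" for z
    proof (induction rule: rtranclp_induct)
      case base then show ?case by simp
    next
      case (step y z)
      then have yz: "E y z" "y \<in> V - S" "z \<in> V - S" by auto
      have "y \<in> K" "z \<in> K" using yz step(1) k(2) unfolding reach_in_def
        by (auto intro: rtranclp.rtrancl_into_rtrancl)
      then have "y \<notin> X" "z \<notin> X" using K(2) XA by auto
      then have "y \<in> C - D \<longleftrightarrow> z \<in> C - D"
        using CDE[of y z] CDE[of z y] G[OF yz(1)] yz(1) CDU unfolding X_def by blast
      then show ?case using step.IH by blast
    qed
    have side: "z \<in> K \<Longrightarrow> (z \<in> C - D \<longleftrightarrow> k \<in> C - D)" for z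
      using side0 k(2) unfolding reach_in_def by blast
    have SD: "S \<subseteq> D"
    proof (rule ccontr)
      assume "\<not> S \<subseteq> D"
      then obtain s where s: "s \<in> S" "s \<notin> D" by blast
      then have sC: "s \<in> C - D" using CDU sepU unfolding S_def by blast
      from s k(3) obtain u where u: "u \<in> K" "E u s" unfolding nbh_def by blast
      have "u \<notin> X" using u K(2) XA by blast
      then have "u \<in> C - D" using CDE[of s u] G[OF u(2)] sC CDU unfolding X_def by blast
      then have kCD: "k \<in> C - D" using side u(1) by blast
      have KCD: "K \<subseteq> C - D" using side kCD by blast
      have SC: "S \<subseteq> C"
      proof
        fix v assume "v \<in> S"
        then obtain u' where "u' \<in> K" "E u' v" using k(3) unfolding nbh_def by blast
        then show "v \<in> C" using KCD CDE[of u' v] G CDU by blast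
      qed
      have "\<exists>v w. E v w \<and> v \<in> V \<and> w \<in> V \<and> (v \<in> D - C \<and> v \<notin> As i) \<and> \<not> (w \<in> D - C \<and> w \<notin> As i)"
      proof (rule cross_edge[OF conn[OF r(1)]])
        show "k \<in> V" using k(1) by blast
        show "r \<in> D - C \<and> r \<notin> As i" using r rC CDU by blast
        show "\<not> (k \<in> D - C \<and> k \<notin> As i)" using kCD by blast
      qed
      then obtain v w where vw: "E v w" "v \<in> V" "w \<in> V" "v \<in> D - C" "v \<notin> As i" "\<not> (w \<in> D - C \<and> w \<notin> As i)"
        by blast
      have wD: "w \<in> D" using CDE[of w v] G[OF vw(1)] vw CDU by blast
      have vB: "v \<in> Bs i - As i" using vw sepU by blast
      have wB: "w \<in> Bs i" using sepE[of w i v] vB G[OF vw(1)] vw(3) sepU by blast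
      have wS: "w \<in> S \<and> w \<in> X"
      proof (cases "w \<in> C")
        case True then show ?thesis using wD XA wB unfolding X_def S_def by blast
      next
        case False then have "w \<in> As i" using vw wD by blast
        then show ?thesis using wB SC False unfolding S_def by blast
      qed
      then obtain y where "y \<in> K" "E y w" using k(3) unfolding nbh_def by blast
      then show False using key[of w y] wS G KCD K(2) by blast
    qed
    have CDA: "C - D \<subseteq> As i"
    proof
      fix u assume u: "u \<in> C - D"
      show "u \<in> As i"
      proof (rule ccontr)
        assume uA: "u \<notin> As i"
        have uV: "u \<in> V" using u CDU by blast
        have "\<exists>v w. E v w \<and> v \<in> V \<and> w \<in> V \<and> (v \<in> C - D \<and> v \<notin> As i) \<and> \<not> (w \<in> C - D \<and> w \<notin> As i)"
          by (rule cross_edge[OF conn[OF uV r(1)]]) (use u uA rC in auto)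
        then obtain v w where vw: "E v w" "v \<in> V" "w \<in> V" "v \<in> C - D" "v \<notin> As i" "\<not> (w \<in> C - D \<and> w \<notin> As i)"
          by blast
        have wC: "w \<in> C" using CDE[of v w] vw CDU by blast
        show False
        proof (cases "w \<in> D")
          case True then show False using key[of w v] wC vw G unfolding X_def by blast
        next
          case False
          then have "w \<in> As i" using vw wC by blast
          moreover have "v \<in> Bs i - As i" using vw sepU by blast
          ultimately have "w \<in> S" using sepE[of w i v] G[OF vw(1)] unfolding S_def by blast
          then show False using SD False by blast
        qed
      qed
    qed
    have "C \<subseteq> As i" using CDA XA unfolding X_def by blast
    moreover have "Bs i \<subseteq> D"
    proof
      fix b assume b: "b \<in> Bs i"
      show "b \<in> D"
      proof (cases "b \<in> As i")
        case True then show ?thesis using b SD unfolding S_def by blast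
      next
        case False then show ?thesis using b sepU CDU \<open>C \<subseteq> As i\<close> by blast
      qed
    qed
    ultimately show ?thesis unfolding sep_le_def by simp
  qed
  then show ?thesis by blast
qed

end
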